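(* The cycle $C_5$ is the only connected graph $G$ without a triangle $K_3$ as a subgraph for which $\chi(G)=3$ and $\mathrm{sn}(G)=n-2$, where $n$ is the order of $G$.
   Context: All graphs are finite and simple. For a graph $G=(V,E)$ with $k=\chi(G)$, a proper $k$-colouring is a map $c:V\to[k]$ with $c(u)\neq c(v)$ for every edge $uv$. A set $S\subseteq V$ is a determining set for $(G,c)$ if there is no proper $k$-colouring $c'\neq c$ with $c'(s)=c(s)$ for all $s\in S$; a critical set is an inclusion-minimal determining set. $\mathrm{sn}(G)$ is the minimum size of a critical set over all proper $\chi(G)$-colourings $c$ of $G$ (equivalently, the minimum number of vertices coloured in a partial colouring that extends uniquely to a proper $\chi(G)$-colouring). *)

theory Defs
  imports "HOL-Library.FuncSet"
begin

definition simple_graph :: "'a set \<Rightarrow> 'a set set \<Rightarrow> bool" where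
  "simple_graph V E \<longleftrightarrow> finite V \<and>
     (\<forall>e\<in>E. \<exists>u v. e = {u, v} \<and> u \<noteq> v \<and> u \<in> V \<and> v \<in> V)"

definition adj :: "'a set set \<Rightarrow> 'a \<Rightarrow> 'a \<Rightarrow> bool" where
  "adj E u v \<longleftrightarrow> {u, v} \<in> E"

definition connected_graph :: "'a set \<Rightarrow> 'a set set \<Rightarrow> bool" where
  "connected_graph V E \<longleftrightarrow> V \<noteq> {} \<and>
     (\<forall>u\<in>V. \<forall>v\<in>V. (adj E)\<^sup>*\<^sup>* u v)"

definition triangle_free :: "'a set set \<Rightarrow> bool" where
  "triangle_free E \<longleftrightarrow> \<not> (\<exists>x y z. adj E x y \<and> adj E y z \<and> adj E x z)"

definition proper_colouring :: "'a set \<Rightarrow> 'a set set \<Rightarrow> nat \<Rightarrow> ('a \<Rightarrow> nat) \<Rightarrow> bool" where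
  "proper_colouring V E k c \<longleftrightarrow> c \<in> V \<rightarrow>\<^sub>E {1..k} \<and>
     (\<forall>u\<in>V. \<forall>v\<in>V. adj E u v \<longrightarrow> c u \<noteq> c v)"

definition chromatic_number :: "'a set \<Rightarrow> 'a set set \<Rightarrow> nat" where
  "chromatic_number V E = (LEAST k. \<exists>c. proper_colouring V E k c)"

definition determining_set :: "'a set \<Rightarrow> 'a set set \<Rightarrow> ('a \<Rightarrow> nat) \<Rightarrow> 'a set \<Rightarrow> bool" where
  "determining_set V E c S \<longleftrightarrow> S \<subseteq> V \<and>
     \<not> (\<exists>c'. proper_colouring V E (chromatic_number V E) c' \<and> c' \<noteq> c \<and> (\<forall>s\<in>S. c' s = c s))"

definition critical_set :: "'a set \<Rightarrow> 'a set set \<Rightarrow> ('a \<Rightarrow> nat) \<Rightarrow> 'a set \<Rightarrow> bool" where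
  "critical_set V E c S \<longleftrightarrow> determining_set V E c S \<and>
     (\<forall>T. T \<subset> S \<longrightarrow> \<not> determining_set V E c T)"

definition sn :: "'a set \<Rightarrow> 'a set set \<Rightarrow> nat" where
  "sn V E = Min {card S | S c. proper_colouring V E (chromatic_number V E) c \<and> critical_set V E c S}"

definition C5_V :: "nat set" where "C5_V = {0..<5}"
definition C5_E :: "nat set set" where "C5_E = {{i, (i + 1) mod 5} | i. i < 5}"

definition graph_iso :: "'a set \<Rightarrow> 'a set set \<Rightarrow> 'b set \<Rightarrow> 'b set set \<Rightarrow> bool" where
  "graph_iso V E V' E' \<longleftrightarrow> (\<exists>f. bij_betw f V V' \<and>
     (\<forall>u\<in>V. \<forall>v\<in>V. {u, v} \<in> E \<longleftrightarrow> {f u, f v} \<in> E'))"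

end

theory Submission
  imports Defs
begin

locale G3 =
  fixes V :: "'a set" and E :: "'a set set"
  assumes sg: "simple_graph V E" and conn: "connected_graph V E" and tf: "triangle_free E"
    and chi: "chromatic_number V E = 3"
begin

abbreviation P3 where "P3 c \<equiv> proper_colouring V E 3 c"

lemma finV: "finite V" using sg by (simp add: simple_graph_def)

lemma adj_sym: "adj E u v \<Longrightarrow> adj E v u"
  by (simp add: adj_def insert_commute)

lemma adjD: assumes "adj E u v" shows "u \<in> V" "v \<in> V" "u \<noteq> v"
proof -
  from assms sg obtain a b where "{u,v} = {a,b}" "a \<noteq> b" "a \<in> V" "b \<in> V"
    unfolding adj_def simple_graph_def by blast
  then show "u \<in> V" "v \<in> V" "u \<noteq> v" by (auto simp: doubleton_eq_iff)
qed

lemma notri: "adj E x y \<Longrightarrow> adj E y z \<Longrightarrow> adj E x z \<Longrightarrow> False"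
  using tf by (auto simp: triangle_free_def)

lemma P3_range: "P3 c \<Longrightarrow> v \<in> V \<Longrightarrow> c v = 1 \<or> c v = 2 \<or> c v = 3"
  unfolding proper_colouring_def by (auto simp: PiE_iff)

lemma P3_adj: "P3 c \<Longrightarrow> adj E u v \<Longrightarrow> c u \<noteq> c v"
  unfolding proper_colouring_def using adjD by blast

lemma ex_P3: "\<exists>c. P3 c"
proof -
  obtain h where h: "bij_betw h V {0..<card V}" using ex_bij_betw_finite_nat[OF finV] by blast
  define c where "c = restrict (\<lambda>v. h v + 1) V"
  have "proper_colouring V E (card V) c"
    unfolding proper_colouring_def
  proof
    have "\<And>x. x \<in> V \<Longrightarrow> h x < card V" using h by (auto dest: bij_betwE)
    then show "c \<in> V \<rightarrow>\<^sub>E {1..card V}" by (auto simp: c_def Suc_le_eq)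
    show "\<forall>u\<in>V. \<forall>v\<in>V. adj E u v \<longrightarrow> c u \<noteq> c v"
      using h adjD(3) by (auto simp: c_def bij_betw_def inj_on_def)
  qed
  then have "\<exists>k c. proper_colouring V E k c" by blast
  then have "\<exists>c. proper_colouring V E (chromatic_number V E) c"
    unfolding chromatic_number_def by (rule LeastI_ex)
  then show ?thesis using chi by simp
qed

lemma no_P2: "proper_colouring V E 2 c \<Longrightarrow> False"
proof -
  assume "proper_colouring V E 2 c"
  then have "chromatic_number V E \<le> 2" unfolding chromatic_number_def by (intro Least_le) blast
  then show False using chi by simp
qed

lemma P3_upd: assumes "P3 c" "v \<in> V" "k \<in> {1,2,3}" "\<And>u. adj E v u \<Longrightarrow> c u \<noteq> k"
  shows "P3 (c(v:=k))"
  unfolding proper_colouring_def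
proof (intro conjI ballI impI)
  show "c(v := k) \<in> V \<rightarrow>\<^sub>E {1..3}" using assms(1-3)
    by (auto simp: proper_colouring_def PiE_iff extensional_def)
  fix x y assume xy: "x \<in> V" "y \<in> V" "adj E x y"
  show "(c(v := k)) x \<noteq> (c(v := k)) y"
  proof (cases "x = v")
    case True
    then have "y \<noteq> v" using adjD(3)[OF xy(3)] by simp
    then show ?thesis using True assms(4)[of y] xy by simp
  next
    case False
    show ?thesis
    proof (cases "y = v")
      case True
      then show ?thesis using False assms(4)[of x] xy adj_sym by auto
    next
      case False2: False
      then show ?thesis using False P3_adj[OF assms(1) xy(3)] by simp
    qed
  qed
qed

lemma force: assumes "P3 c" "P3 c'" "adj E v x" "adj E v y" "c' x = c x" "c' y = c y" "c x \<noteq> c y"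
  shows "c' v = c v"
proof -
  have V: "v \<in> V" "x \<in> V" "y \<in> V" using adjD assms by auto
  have "c v \<noteq> c x" "c v \<noteq> c y" "c' v \<noteq> c x" "c' v \<noteq> c y"
    using P3_adj[OF assms(1) assms(3)] P3_adj[OF assms(1) assms(4)]
      P3_adj[OF assms(2) assms(3)] P3_adj[OF assms(2) assms(4)] assms(5,6) by auto
  moreover have "c v = 1 \<or> c v = 2 \<or> c v = 3" "c' v = 1 \<or> c' v = 2 \<or> c' v = 3"
    "c x = 1 \<or> c x = 2 \<or> c x = 3" "c y = 1 \<or> c y = 2 \<or> c y = 3"
    using P3_range assms V by auto
  ultimately show ?thesis using assms(7) by (elim disjE) auto
qed

definition good where
  "good c U \<longleftrightarrow> P3 c \<and> U \<subseteq> V \<and> card U = 3 \<and>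
     (\<forall>c'. P3 c' \<longrightarrow> (\<forall>s\<in>V-U. c' s = c s) \<longrightarrow> (\<forall>u\<in>U. c' u = c u))"

lemma crit_exists:
  assumes "determining_set V E c S" shows "\<exists>T\<subseteq>S. critical_set V E c T"
proof -
  obtain T where T: "T \<subseteq> S \<and> determining_set V E c T"
    and min: "\<forall>T'. T' \<subseteq> S \<and> determining_set V E c T' \<longrightarrow> card T \<le> card T'"
    using ex_has_least_nat[of "\<lambda>T. T \<subseteq> S \<and> determining_set V E c T", OF conjI[OF subset_refl assms], of card]
    by blast
  have fT: "finite T" using T finV by (auto simp: determining_set_def intro: finite_subset)
  have "critical_set V E c T"
    unfolding critical_set_def
  proof (intro conjI allI impI)
    show "determining_set V E c T" using T by simp
    fix T' assume "T' \<subset> T"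
    then have "card T' < card T" using fT by (simp add: psubset_card_mono)
    moreover have "T' \<subseteq> S" using \<open>T' \<subset> T\<close> T by blast
    ultimately show "\<not> determining_set V E c T'" using min by (meson not_le)
  qed
  then show ?thesis using T by blast
qed

lemma sn_le: assumes "P3 c" "critical_set V E c T" shows "sn V E \<le> card T"
proof -
  have fin: "finite {card S | S c. proper_colouring V E (chromatic_number V E) c \<and> critical_set V E c S}"
  proof (rule finite_subset[of _ "{..card V}"])
    show "{card S | S c. proper_colouring V E (chromatic_number V E) c \<and> critical_set V E c S} \<subseteq> {..card V}"
      using finV by (auto simp: critical_set_def determining_set_def intro!: card_mono)
  qed simp
  have "card T \<in> {card S | S c. proper_colouring V E (chromatic_number V E) c \<and> critical_set V E c S}"
    unfolding chi using assms by blast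
  then show ?thesis unfolding sn_def by (rule Min_le[OF fin])
qed

lemma good_sn: assumes "good c U" shows "sn V E \<le> card V - 3"
proof -
  have c: "P3 c" and U: "U \<subseteq> V" "card U = 3"
    and F: "\<And>c'. P3 c' \<Longrightarrow> (\<forall>s\<in>V-U. c' s = c s) \<Longrightarrow> (\<forall>u\<in>U. c' u = c u)"
    using assms unfolding good_def by auto
  have "determining_set V E c (V - U)"
    unfolding determining_set_def chi
  proof (intro conjI notI)
    show "V - U \<subseteq> V" by auto
    assume "\<exists>c'. P3 c' \<and> c' \<noteq> c \<and> (\<forall>s\<in>V - U. c' s = c s)"
    then obtain c' where c': "P3 c'" "c' \<noteq> c" "\<forall>s\<in>V - U. c' s = c s" by blast
    have "\<forall>u\<in>U. c' u = c u" using F[OF c'(1) c'(3)] .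
    then have "c' = c"
      using c c' by (intro PiE_ext[of c' V "\<lambda>_. {1..3}" c]) (auto simp: proper_colouring_def)
    then show False using c'(2) by simp
  qed
  then obtain T where T: "T \<subseteq> V - U" "critical_set V E c T" using crit_exists by blast
  have "card T \<le> card (V - U)" using T finV by (intro card_mono) auto
  also have "\<dots> = card V - 3" using U finV by (simp add: card_Diff_subset finite_subset)
  finally show ?thesis using sn_le[OF c T(2)] by simp
qed

lemma seq3:
  assumes c: "P3 c" and d: "u1 \<noteq> u2" "u1 \<noteq> u3" "u2 \<noteq> u3"
    and a1: "adj E u1 x1" "adj E u1 y1" "x1 \<noteq> u2" "x1 \<noteq> u3" "y1 \<noteq> u2" "y1 \<noteq> u3" "c x1 \<noteq> c y1"
    and a2: "adj E u2 x2" "adj E u2 y2" "x2 \<noteq> u3" "y2 \<noteq> u3" "c x2 \<noteq> c y2"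
    and a3: "adj E u3 x3" "adj E u3 y3" "c x3 \<noteq> c y3"
  shows "good c {u1,u2,u3}"
  unfolding good_def
proof (intro conjI allI impI)
  show "P3 c" by fact
  show "{u1,u2,u3} \<subseteq> V" using adjD a1 a2 a3 by auto
  show "card {u1,u2,u3} = 3" using d by simp
  fix c' assume c': "P3 c'" and ag: "\<forall>s\<in>V - {u1, u2, u3}. c' s = c s"
  have nx: "x1 \<noteq> u1" "y1 \<noteq> u1" "x2 \<noteq> u2" "y2 \<noteq> u2" "x3 \<noteq> u3" "y3 \<noteq> u3"
    using adjD(3)[OF a1(1)] adjD(3)[OF a1(2)] adjD(3)[OF a2(1)] adjD(3)[OF a2(2)]
      adjD(3)[OF a3(1)] adjD(3)[OF a3(2)] by auto
  have inV: "x1 \<in> V" "y1 \<in> V" "x2 \<in> V" "y2 \<in> V" "x3 \<in> V" "y3 \<in> V"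
    using adjD a1 a2 a3 by auto
  have ag2: "\<And>s. s \<in> V \<Longrightarrow> s \<notin> {u1,u2,u3} \<Longrightarrow> c' s = c s" using ag by auto
  have e1: "c' u1 = c u1"
    by (rule force[OF c c' a1(1,2)]) (use ag2 inV nx a1 in auto)
  have ag3: "\<And>s. s \<in> V \<Longrightarrow> s \<notin> {u2,u3} \<Longrightarrow> c' s = c s" using ag2 e1 by auto
  have e2: "c' u2 = c u2"
    by (rule force[OF c c' a2(1,2)]) (use ag3 inV nx a2 in auto)
  have ag4: "\<And>s. s \<in> V \<Longrightarrow> s \<noteq> u3 \<Longrightarrow> c' s = c s" using ag3 e2 by auto
  have e3: "c' u3 = c u3"
    by (rule force[OF c c' a3(1,2)]) (use ag4 inV nx a3 in auto)
  show "\<forall>u\<in>{u1, u2, u3}. c' u = c u" using e1 e2 e3 by auto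
qed

end

locale G3m = G3 +
  fixes c0
  assumes P0: "P3 c0"
    and minW: "\<And>c. P3 c \<Longrightarrow> card {v\<in>V. c0 v = 3} \<le> card {v\<in>V. c v = 3}"
begin

lemma c0r: "v \<in> V \<Longrightarrow> c0 v = 1 \<or> c0 v = 2 \<or> c0 v = 3" using P3_range[OF P0] .
lemma c0a: "adj E u v \<Longrightarrow> c0 u \<noteq> c0 v" using P3_adj[OF P0] .

lemma fewer3:
  assumes "P3 c" "w \<in> V" "c0 w = 3" "{v\<in>V. c v = 3} \<subseteq> {v\<in>V. c0 v = 3} - {w}"
  shows False
proof -
  have "card {v\<in>V. c v = 3} < card {v\<in>V. c0 v = 3}"
    using assms(2-4) finV by (intro psubset_card_mono) auto
  then show False using minW[OF assms(1)] by simp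
qed

lemma satW:
  assumes "v \<in> V" "c0 v = 3" "k = 1 \<or> k = 2"
  shows "\<exists>u. adj E v u \<and> c0 u = k"
proof (rule ccontr)
  assume no: "\<not> (\<exists>u. adj E v u \<and> c0 u = k)"
  have P: "P3 (c0(v := k))" using assms no by (intro P3_upd[OF P0]) auto
  show False
    by (rule fewer3[OF P assms(1,2)]) (use assms(3) in auto)
qed

definition adjW where "adjW x y \<longleftrightarrow> adj E x y \<and> c0 x \<noteq> 3 \<and> c0 y \<noteq> 3"

definition pth where
  "pth w p n \<longleftrightarrow> adj E w (p 0) \<and> c0 (p 0) = 1 \<and> adj E w (p n) \<and> c0 (p n) = 2 \<and>
     (\<forall>i<n. adjW (p i) (p (Suc i)))"

lemma kempe:
  assumes w: "w \<in> V" "c0 w = 3"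
  shows "\<exists>p n. pth w p n"
proof -
  define R where "R = {v. \<exists>a. adj E w a \<and> c0 a = 1 \<and> adjW\<^sup>*\<^sup>* a v}"
  have Rprop: "v \<in> V \<and> (c0 v = 1 \<or> c0 v = 2)" if "v \<in> R" for v
  proof -
    from that obtain a where a: "adj E w a" "c0 a = 1" "adjW\<^sup>*\<^sup>* a v" unfolding R_def by blast
    from a(3) show ?thesis
    proof (induction rule: rtranclp_induct)
      case base then show ?case using a adjD by auto
    next
      case (step y z)
      then show ?case using adjD c0r unfolding adjW_def by blast
    qed
  qed
  have Rclos: "u \<in> R" if "v \<in> R" "adjW v u" for u v
    using that unfolding R_def by (blast intro: rtranclp.rtrancl_into_rtrancl)
  have wR: "w \<notin> R" using Rprop w by fastforce
  show ?thesis
  proof (cases "\<exists>b\<in>R. adj E w b \<and> c0 b = 2")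
    case True
    then obtain b a where b: "adj E w b" "c0 b = 2" and a: "adj E w a" "c0 a = 1" "adjW\<^sup>*\<^sup>* a b"
      unfolding R_def by blast
    then obtain n where "(adjW ^^ n) a b" using rtranclp_power by metis
    then obtain p where "p 0 = a" "p n = b" "\<forall>i<n. adjW (p i) (p (Suc i))"
      using relpowp_fun_conv by metis
    then have "pth w p n" using a b unfolding pth_def by simp
    then show ?thesis by blast
  next
    case False
    define c1 where "c1 = (\<lambda>v. if v \<in> R then 3 - c0 v else if v = w then 1 else c0 v)"
    have P: "P3 c1"
      unfolding proper_colouring_def
    proof (intro conjI ballI impI)
      show "c1 \<in> V \<rightarrow>\<^sub>E {1..3}"
      proof (rule PiE_I)
        fix v assume "v \<in> V" then show "c1 v \<in> {1..3}"
          using Rprop c0r unfolding c1_def by fastforce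
      next
        fix v assume "v \<notin> V"
        then have "v \<notin> R" "v \<noteq> w" using Rprop w by auto
        then show "c1 v = undefined" using P0 \<open>v \<notin> V\<close>
          unfolding c1_def proper_colouring_def by (auto simp: PiE_iff extensional_def)
      qed
    next
      fix u v assume uv: "u \<in> V" "v \<in> V" "adj E u v"
      have key: "c1 x \<noteq> c1 y" if xy: "adj E x y" "x \<in> R \<or> x = w" for x y
      proof (cases "x \<in> R")
        case True
        note xR = True
        show ?thesis
        proof (cases "y \<in> R")
          case True
          then have "c0 x \<le> 2" "c0 y \<le> 2" using xR Rprop by fastforce+
          then show ?thesis using True xR c0a[OF xy(1)] unfolding c1_def by auto
        next
          case False
          show ?thesis
          proof (cases "y = w")
            case True
            then have "c0 x \<noteq> 2" using \<open>\<not> (\<exists>b\<in>R. adj E w b \<and> c0 b = 2)\<close> xR xy(1) adj_sym by blast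
            then have "c0 x = 1" using Rprop xR by blast
            then show ?thesis using True xR wR unfolding c1_def by simp
          next
            case yw: False
            have "c0 y = 3"
            proof (rule ccontr)
              assume "c0 y \<noteq> 3"
              then have "adjW x y" using xy Rprop[OF xR] unfolding adjW_def by auto
              then show False using Rclos xR False by blast
            qed
            then show ?thesis using xR False yw Rprop[OF xR] unfolding c1_def by auto
          qed
        qed
      next
        case False
        then have xw: "x = w" using xy by blast
        then have yV: "y \<in> V" using adjD xy by auto
        have "c0 y \<noteq> 3" using c0a[OF xy(1)] xw w by simp
        show ?thesis
        proof (cases "y \<in> R")
          case True
          then show ?thesis using \<open>\<not> (\<exists>b\<in>R. adj E w b \<and> c0 b = 2)\<close> xw xy(1) Rprop wR
            unfolding c1_def by auto
        next
          case yR: False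
          have "c0 y \<noteq> 1"
          proof
            assume "c0 y = 1"
            then have "y \<in> R" using xw xy(1) unfolding R_def by blast
            then show False using yR by simp
          qed
          then have "c0 y = 2" using c0r yV \<open>c0 y \<noteq> 3\<close> by blast
          moreover have "y \<noteq> w" using adjD(3)[OF xy(1)] xw by simp
          ultimately show ?thesis using xw yR wR unfolding c1_def by simp
        qed
      qed
      show "c1 u \<noteq> c1 v"
      proof (cases "u \<in> R \<or> u = w")
        case True then show ?thesis using key uv(3) by blast
      next
        case False
        show ?thesis
        proof (cases "v \<in> R \<or> v = w")
          case True then show ?thesis using key adj_sym[OF uv(3)] by metis
        next
          case False2: False
          then show ?thesis using False c0a[OF uv(3)] unfolding c1_def by auto
        qed
      qed
    qed
    have "{v\<in>V. c1 v = 3} \<subseteq> {v\<in>V. c0 v = 3} - {w}"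
    proof
      fix v assume v: "v \<in> {v\<in>V. c1 v = 3}"
      show "v \<in> {v\<in>V. c0 v = 3} - {w}"
      proof (cases "v \<in> R")
        case True then show ?thesis using v Rprop[OF True] unfolding c1_def by auto
      next
        case False then show ?thesis using v unfolding c1_def by (auto split: if_splits)
      qed
    qed
    then show ?thesis using fewer3[OF P w] by blast
  qed
qed

end

locale G3w = G3m +
  fixes w
  assumes wV: "w \<in> V" and w3: "c0 w = 3"
begin

definition L where "L = (LEAST n. \<exists>p. pth w p n)"
definition q where "q = (SOME p. pth w p L)"

lemma pthq: "pth w q L"
proof -
  obtain p0 n0 where "pth w p0 n0" using kempe[OF wV w3] by blast
  then have "\<exists>p. pth w p L" unfolding L_def
    by (intro LeastI_ex[where P = "\<lambda>n. \<exists>p. pth w p n"]) blast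
  then show ?thesis unfolding q_def by (rule someI_ex)
qed

lemma Lmin: "pth w p n \<Longrightarrow> L \<le> n"
  unfolding L_def by (rule Least_le) blast

lemma qcol: "i \<le> L \<Longrightarrow> q i \<in> V \<and> c0 (q i) = (if even i then 1 else 2)"
proof (induction i)
  case 0 then show ?case using pthq adjD unfolding pth_def by auto
next
  case (Suc i)
  then have IH: "q i \<in> V \<and> c0 (q i) = (if even i then 1 else 2)" and "i < L" by auto
  then have a: "adjW (q i) (q (Suc i))" using pthq unfolding pth_def by blast
  then have V: "q (Suc i) \<in> V" unfolding adjW_def using adjD by blast
  have "c0 (q (Suc i)) \<noteq> 3" "c0 (q (Suc i)) \<noteq> c0 (q i)" using a c0a[of "q i" "q (Suc i)"] unfolding adjW_def by auto
  then show ?case using c0r[OF V] IH V by auto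
qed

lemma qV: "i \<le> L \<Longrightarrow> q i \<in> V" using qcol by blast
lemma qc1: "i \<le> L \<Longrightarrow> even i \<Longrightarrow> c0 (q i) = 1" using qcol by auto
lemma qc2: "i \<le> L \<Longrightarrow> odd i \<Longrightarrow> c0 (q i) = 2" using qcol by auto

lemma qadj: "i < L \<Longrightarrow> adj E (q i) (q (Suc i))"
  using pthq unfolding pth_def adjW_def by blast

lemma q0w: "adj E w (q 0)" and qLw: "adj E w (q L)"
  using pthq unfolding pth_def by auto

lemma Lodd: "odd L"
proof (rule ccontr)
  assume "\<not> odd L"
  then have "c0 (q L) = 1" using qc1 by auto
  then show False using pthq unfolding pth_def by simp
qed

lemma q_interior: assumes "0 < i" "i < L" shows "\<not> adj E w (q i)"
proof
  assume aw: "adj E w (q i)"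
  show False
  proof (cases "even i")
    case True
    define p where "p = (\<lambda>k. q (k + i))"
    have "pth w p (L - i)" unfolding pth_def
    proof (intro conjI allI impI)
      show "adj E w (p 0)" "c0 (p 0) = 1" using aw qc1 True assms unfolding p_def by auto
      show "adj E w (p (L - i))" "c0 (p (L - i)) = 2" using pthq assms unfolding pth_def p_def by auto
      fix k assume "k < L - i"
      then show "adjW (p k) (p (Suc k))" using pthq unfolding pth_def p_def by auto
    qed
    then show False using Lmin assms by fastforce
  next
    case False
    have "pth w q i" unfolding pth_def
      using pthq assms aw qc1 qc2 False unfolding pth_def by auto
    then show False using Lmin assms by fastforce
  qed
qed

lemma q_chord: assumes "i + 2 \<le> j" "j \<le> L" shows "\<not> adj E (q i) (q j)"
proof
  assume a: "adj E (q i) (q j)"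
  define d where "d = j - i - 1"
  define p where "p = (\<lambda>k. if k \<le> i then q k else q (k + d))"
  have d: "d \<ge> 1" "i + 1 + d = j" using assms unfolding d_def by auto
  have "pth w p (L - d)" unfolding pth_def
  proof (intro conjI allI impI)
    show "adj E w (p 0)" "c0 (p 0) = 1" using pthq unfolding p_def pth_def by auto
    have "\<not> L - d \<le> i" using d assms by auto
    then have "p (L - d) = q L" using d assms unfolding p_def by auto
    then show "adj E w (p (L - d))" "c0 (p (L - d)) = 2" using pthq unfolding pth_def by auto
    fix k assume k: "k < L - d"
    show "adjW (p k) (p (Suc k))"
    proof (cases "k < i")
      case True then show ?thesis using pthq assms unfolding pth_def p_def by auto
    next
      case False
      show ?thesis
      proof (cases "k = i")
        case True
        have "p k = q i" "p (Suc k) = q j" using True d unfolding p_def by auto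
        moreover have "c0 (q i) \<noteq> 3" "c0 (q j) \<noteq> 3" using qcol assms by auto
        ultimately show ?thesis using a unfolding adjW_def by simp
      next
        case False2: False
        then have "p k = q (k + d)" "p (Suc k) = q (Suc (k + d))" using False unfolding p_def by auto
        moreover have "k + d < L" using k d by auto
        ultimately show ?thesis using pthq unfolding pth_def by auto
      qed
    qed
  qed
  then show False using Lmin d assms by fastforce
qed

lemma q_eq: assumes "i < j" "j \<le> L" shows "q i \<noteq> q j"
proof
  assume e: "q i = q j"
  define d where "d = j - i"
  define p where "p = (\<lambda>k. if k \<le> i then q k else q (k + d))"
  have d: "d \<ge> 1" "i + d = j" using assms unfolding d_def by auto
  have "pth w p (L - d)" unfolding pth_def
  proof (intro conjI allI impI)
    show "adj E w (p 0)" "c0 (p 0) = 1" using pthq unfolding p_def pth_def by auto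
    have "p (L - d) = q L"
    proof (cases "L - d \<le> i")
      case True
      then have "j = L" "L - d = i" using d assms by auto
      then show ?thesis using e unfolding p_def by auto
    next
      case False then show ?thesis using d assms unfolding p_def by auto
    qed
    then show "adj E w (p (L - d))" "c0 (p (L - d)) = 2" using pthq unfolding pth_def by auto
    fix k assume k: "k < L - d"
    show "adjW (p k) (p (Suc k))"
    proof (cases "k < i")
      case True then show ?thesis using pthq assms unfolding pth_def p_def by auto
    next
      case False
      show ?thesis
      proof (cases "k = i")
        case True
        have "p k = q j" "p (Suc k) = q (Suc j)" using True d e unfolding p_def by auto
        moreover have "j < L" using k True d by auto
        ultimately show ?thesis using pthq unfolding pth_def by auto
      next
        case False2: False
        then have "p k = q (k + d)" "p (Suc k) = q (Suc (k + d))" using False unfolding p_def by auto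
        moreover have "k + d < L" using k d by auto
        ultimately show ?thesis using pthq unfolding pth_def by auto
      qed
    qed
  qed
  then show False using Lmin d assms by fastforce
qed

lemma L3: "L \<ge> 3"
proof -
  have "L \<noteq> 1"
  proof
    assume L1: "L = 1"
    have a1: "adj E (q 0) (q 1)" using qadj[of 0] L1 by simp
    have a2: "adj E w (q 1)" using qLw L1 by simp
    show False using notri[OF q0w a1 a2] .
  qed
  moreover have "L \<noteq> 0" using Lodd by (intro notI) simp
  moreover have "L \<noteq> 2" using Lodd by auto
  ultimately show ?thesis by linarith
qed

end

context G3 begin

lemma conn_out:
  assumes "x0 \<in> C" "C \<subseteq> V" "y \<in> V" "y \<notin> C"
  shows "\<exists>x z. x \<in> C \<and> z \<notin> C \<and> adj E x z"
proof -
  have r: "(adj E)\<^sup>*\<^sup>* x0 y" using conn assms unfolding connected_graph_def by blast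
  have "y \<notin> C \<longrightarrow> (\<exists>x z. x \<in> C \<and> z \<notin> C \<and> adj E x z)"
    using r
  proof (induction rule: rtranclp_induct)
    case base then show ?case using assms(1) by blast
  next
    case (step y' z')
    then show ?case by blast
  qed
  then show ?thesis using assms by blast
qed

end

lemma C5_E_eq: "C5_E = {{0,1},{1,2},{2,3},{3,4},{4,0}}"
proof -
  have "C5_E = (\<lambda>i. {i, (i + 1) mod 5}) ` {..<5}" unfolding C5_E_def by auto
  also have "{..<5::nat} = {0,1,2,3,4}" by auto
  finally show ?thesis by (simp add: insert_commute numeral_2_eq_2)
qed

lemma iso5:
  assumes V: "V = {a0,a1,a2,a3,a4}"
    and d: "a0 \<noteq> a1" "a0 \<noteq> a2" "a0 \<noteq> a3" "a0 \<noteq> a4" "a1 \<noteq> a2" "a1 \<noteq> a3" "a1 \<noteq> a4"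
      "a2 \<noteq> a3" "a2 \<noteq> a4" "a3 \<noteq> a4"
    and e: "{a0,a1} \<in> E" "{a1,a2} \<in> E" "{a2,a3} \<in> E" "{a3,a4} \<in> E" "{a4,a0} \<in> E"
    and n: "{a0,a2} \<notin> E" "{a0,a3} \<notin> E" "{a1,a3} \<notin> E" "{a1,a4} \<notin> E" "{a2,a4} \<notin> E"
    and s: "\<And>x. {x} \<notin> E"
  shows "graph_iso V E C5_V C5_E"
proof -
  define f where "f = (\<lambda>v. if v = a0 then 0 else if v = a1 then 1 else if v = a2 then 2
     else if v = a3 then 3 else (4::nat))"
  have fv: "f a0 = 0" "f a1 = 1" "f a2 = 2" "f a3 = 3" "f a4 = 4" using d unfolding f_def by auto
  have "bij_betw f V C5_V"
  proof (rule bij_betw_imageI)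
    show "inj_on f V" unfolding V inj_on_def using fv d by auto
    have "{0..<5::nat} = {0,1,2,3,4}" by auto
    then show "f ` V = C5_V" unfolding V C5_V_def using fv by auto
  qed
  moreover have "\<forall>u\<in>V. \<forall>v\<in>V. {u, v} \<in> E \<longleftrightarrow> {f u, f v} \<in> C5_E"
  proof -
    have e2: "{a1,a0} \<in> E" "{a2,a1} \<in> E" "{a3,a2} \<in> E" "{a4,a3} \<in> E" "{a0,a4} \<in> E"
      using e by (simp_all add: insert_commute)
    have n2: "{a2,a0} \<notin> E" "{a3,a0} \<notin> E" "{a3,a1} \<notin> E" "{a4,a1} \<notin> E" "{a4,a2} \<notin> E"
      using n by (simp_all add: insert_commute)
    show ?thesis unfolding V C5_E_eq
      by (simp add: fv e e2 n n2 s doubleton_eq_iff)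
  qed
  ultimately show ?thesis unfolding graph_iso_def by blast
qed

context G3w begin

lemma qne: "i \<noteq> j \<Longrightarrow> i \<le> L \<Longrightarrow> j \<le> L \<Longrightarrow> q i \<noteq> q j"
  using q_eq[of i j] q_eq[of j i] by (cases "i < j") auto

lemma qadj': "i < L \<Longrightarrow> j = i + 1 \<Longrightarrow> adj E (q i) (q j)" using qadj by simp
lemma qadj'': "i < L \<Longrightarrow> j = i + 1 \<Longrightarrow> adj E (q j) (q i)" using qadj adj_sym by simp

lemma caseL5:
  assumes L5: "L \<ge> 5"
  shows "\<exists>c U. good c U"
proof -
  have Lo: "odd L" by (rule Lodd)
  have L4: "4 < L" using L5 by simp
  have V: "q 0 \<in> V" "q 1 \<in> V" "q 2 \<in> V" "q 3 \<in> V" "q 4 \<in> V" "q L \<in> V" "q (L - 1) \<in> V"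
    using qV L5 by auto
  have col: "c0 (q 0) = 1" "c0 (q 1) = 2" "c0 (q 2) = 1" "c0 (q 3) = 2" "c0 (q 4) = 1"
     "c0 (q L) = 2" "c0 (q (L - 1)) = 1"
    using qc1 qc2 L5 Lo by auto
  have ad: "adj E (q 0) w" "adj E (q 0) (q 1)" "adj E (q 2) (q 1)" "adj E (q 3) (q 2)"
    "adj E (q 3) (q 4)" "adj E (q L) w" "adj E (q L) (q (L - 1))"
    using adj_sym[OF q0w] adj_sym[OF qLw] qadj'[of 0 1] qadj''[of 1 2] qadj''[of 2 3]
      qadj'[of 3 4] qadj''[of "L - 1" L] L5 by auto
  have ne: "q 0 \<noteq> q 1" "q 0 \<noteq> q 2" "q 0 \<noteq> q 3" "q 0 \<noteq> q 4" "q 0 \<noteq> q L" "q 0 \<noteq> q (L - 1)"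
    "q 1 \<noteq> q 2" "q 1 \<noteq> q 3" "q 1 \<noteq> q 4" "q 1 \<noteq> q L" "q 1 \<noteq> q (L - 1)"
    "q 2 \<noteq> q 3" "q 2 \<noteq> q 4" "q 2 \<noteq> q L" "q 2 \<noteq> q (L - 1)"
    "q 3 \<noteq> q 4" "q 3 \<noteq> q L" "q 3 \<noteq> q (L - 1)"
    "q 4 \<noteq> q L" "q L \<noteq> q (L - 1)"
    using L5 L4 by (simp_all add: qne)
  have wne: "w \<noteq> q i" if "i \<le> L" for i using qcol[OF that] w3 by (auto split: if_splits)
  have wne': "w \<noteq> q 0" "w \<noteq> q 1" "w \<noteq> q 2" "w \<noteq> q 3" "w \<noteq> q 4" "w \<noteq> q L" "w \<noteq> q (L - 1)"
    using wne L5 by auto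
  show ?thesis
  proof (cases "\<exists>w'. adj E (q 2) w' \<and> c0 w' = 3")
    case True
    then obtain w' where w': "adj E (q 2) w'" "c0 w' = 3" by blast
    have "w' \<noteq> q L" using w' col by auto
    then have "good c0 {q 0, q 2, q L}"
      using ne wne' w' col ad w3
      by (intro seq3[OF P0, of _ _ _ w "q 1" w' "q 1" w "q (L - 1)"]) auto
    then show ?thesis by blast
  next
    case False
    define c1 where "c1 = c0(q 2 := 3)"
    have P: "P3 c1" unfolding c1_def
      by (rule P3_upd[OF P0 V(3)]) (use False in auto)
    have c1: "c1 (q 0) = 1" "c1 (q 1) = 2" "c1 (q 2) = 3" "c1 (q 4) = 1" "c1 w = 3"
      "c1 (q (L - 1)) = 1"
      using col ne wne' w3 unfolding c1_def by auto
    have "good c1 {q 0, q 3, q L}"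
      using ne wne' c1 ad
      by (intro seq3[OF P, of _ _ _ w "q 1" "q 2" "q 4" w "q (L - 1)"]) auto
    then show ?thesis by blast
  qed
qed


lemma wneq: assumes "i \<le> L" shows "w \<noteq> q i" "q i \<noteq> w"
  using qcol[OF assms] w3 by (auto split: if_splits)

lemma c3neq: assumes "c0 x = 3" "i \<le> L" shows "x \<noteq> q i" "q i \<noteq> x"
  using qcol[OF assms(2)] assms(1) by (auto split: if_splits)

context
  assumes L3: "L = 3"
begin

lemma F3V: "q 0 \<in> V" "q 1 \<in> V" "q 2 \<in> V" "q 3 \<in> V" using qV L3 by auto

lemma F3c: "c0 (q 0) = 1" "c0 (q 1) = 2" "c0 (q 2) = 1" "c0 (q 3) = 2"
  using qc1 qc2 L3 by auto

lemma F3a: "adj E w (q 0)" "adj E (q 0) w" "adj E (q 0) (q 1)" "adj E (q 1) (q 0)"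
  "adj E (q 1) (q 2)" "adj E (q 2) (q 1)" "adj E (q 2) (q 3)" "adj E (q 3) (q 2)"
  "adj E (q 3) w" "adj E w (q 3)"
proof -
  show "adj E w (q 0)" by (rule q0w)
  then show "adj E (q 0) w" by (rule adj_sym)
  show a3: "adj E w (q 3)" using qLw unfolding L3 .
  then show "adj E (q 3) w" by (rule adj_sym)
  show "adj E (q 0) (q 1)" "adj E (q 1) (q 2)" "adj E (q 2) (q 3)"
    by (rule qadj'; simp add: L3)+
  show "adj E (q 1) (q 0)" "adj E (q 2) (q 1)" "adj E (q 3) (q 2)"
    by (rule qadj''; simp add: L3)+
qed

lemma F3n: "\<not> adj E w (q 1)" "\<not> adj E (q 1) w" "\<not> adj E w (q 2)" "\<not> adj E (q 2) w"
  "\<not> adj E (q 0) (q 2)" "\<not> adj E (q 2) (q 0)" "\<not> adj E (q 1) (q 3)" "\<not> adj E (q 3) (q 1)"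
  "\<not> adj E (q 0) (q 3)" "\<not> adj E (q 3) (q 0)"
proof -
  show "\<not> adj E w (q 1)" "\<not> adj E w (q 2)" using q_interior L3 by auto
  then show "\<not> adj E (q 1) w" "\<not> adj E (q 2) w" using adj_sym by blast+
  show "\<not> adj E (q 0) (q 2)" "\<not> adj E (q 1) (q 3)" using q_chord L3 by auto
  then show "\<not> adj E (q 2) (q 0)" "\<not> adj E (q 3) (q 1)" using adj_sym by blast+
  show "\<not> adj E (q 0) (q 3)" using notri F3a by blast
  then show "\<not> adj E (q 3) (q 0)" using adj_sym by blast
qed

lemma F3d: "q 0 \<noteq> q 1" "q 0 \<noteq> q 2" "q 0 \<noteq> q 3" "q 1 \<noteq> q 2" "q 1 \<noteq> q 3" "q 2 \<noteq> q 3"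
  "q 1 \<noteq> q 0" "q 2 \<noteq> q 0" "q 3 \<noteq> q 0" "q 2 \<noteq> q 1" "q 3 \<noteq> q 1" "q 3 \<noteq> q 2"
  "w \<noteq> q 0" "w \<noteq> q 1" "w \<noteq> q 2" "w \<noteq> q 3" "q 0 \<noteq> w" "q 1 \<noteq> w" "q 2 \<noteq> w" "q 3 \<noteq> w"
  using L3 by (simp_all add: qne wneq)

lemmas F3 = F3V F3c F3a F3n F3d

lemma caseW2:
  assumes w': "w' \<in> V" "c0 w' = 3" "w' \<noteq> w" and W: "{v\<in>V. c0 v = 3} = {w, w'}"
  shows "\<exists>c U. good c U"
proof -
  obtain a' b' where ab: "adj E w' a'" "c0 a' = 1" "adj E w' b'" "c0 b' = 2"
    using satW[OF w'(1,2)] by blast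
  have w'q: "w' \<noteq> q 0" "w' \<noteq> q 1" "w' \<noteq> q 2" "w' \<noteq> q 3"
    "q 0 \<noteq> w'" "q 1 \<noteq> w'" "q 2 \<noteq> w'" "q 3 \<noteq> w'"
    using c3neq[OF w'(2)] L3 by auto
  have w'ne: "w \<noteq> w'" using w' by auto
  have only: "u = w \<or> u = w'" if "u \<in> V" "c0 u = 3" for u using W that by blast
  note S = F3 w'q w'ne w' ab w3
  note SS = S[simplified]
  show ?thesis
  proof (cases "\<not> adj E w' (q 0) \<and> \<not> adj E w' (q 3)")
    case True
    have "good c0 {q 0, q 3, w'}"
      by (rule seq3[OF P0, of _ _ _ w "q 1" w "q 2" a' b']) (simp_all add: SS)
    then show ?thesis by blast
  next
    case notR1: False
    show ?thesis
    proof (cases "\<not> adj E w' (q 1) \<and> \<not> adj E w' (q 2)")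
      case True
      have P: "P3 (c0(q 2 := 3))"
      proof (rule P3_upd[OF P0 F3V(3)])
        fix u assume u: "adj E (q 2) u"
        show "c0 u \<noteq> 3"
        proof
          assume "c0 u = 3"
          then have "u = w \<or> u = w'" using only adjD(2)[OF u] by blast
          then show False using u F3n True adj_sym by blast
        qed
      qed simp
      have ab2: "a' \<noteq> q 2" "b' \<noteq> q 2" "a' \<noteq> q 1" "b' \<noteq> q 1" using True ab by auto
      note T = ab2 True
      have "good (c0(q 2 := 3)) {w, w', q 1}"
        by (rule seq3[OF P, of _ _ _ "q 0" "q 3" a' b' "q 0" "q 2"]) (simp_all add: SS T[simplified])
      then show ?thesis by blast
    next
      case notR2: False
      have "(adj E w' (q 0) \<and> adj E w' (q 2)) \<or> (adj E w' (q 1) \<and> adj E w' (q 3))"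
        using notR1 notR2 notri F3a by blast
      then show ?thesis
      proof
        assume A: "adj E w' (q 0) \<and> adj E w' (q 2)"
        have A2: "adj E (q 2) w'" using A adj_sym by blast
        have "good c0 {q 0, q 2, q 3}"
          by (rule seq3[OF P0, of _ _ _ w "q 1" "q 1" w' w "q 2"]) (simp_all add: SS A2)
        then show ?thesis by blast
      next
        assume A: "adj E w' (q 1) \<and> adj E w' (q 3)"
        have A2: "adj E (q 1) w'" using A adj_sym by blast
        note A3 = A2[simplified]
        have "good c0 {q 3, q 1, q 0}"
          by (rule seq3[OF P0, of _ _ _ w "q 2" "q 2" w' w "q 1"]) (simp_all add: SS A3)
        then show ?thesis by blast
      qed
    qed
  qed
qed

lemma caseW1:
  assumes W: "{v\<in>V. c0 v = 3} = {w}" and niso: "\<not> graph_iso V E C5_V C5_E"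
  shows "\<exists>c U. good c U"
proof -
  have only: "u = w" if "u \<in> V" "c0 u = 3" for u using W that by blast
  define C where "C = {w, q 0, q 1, q 2, q 3}"
  have CV: "C \<subseteq> V" unfolding C_def using F3V wV by auto
  have zfacts: "z \<noteq> w \<and> z \<noteq> q 0 \<and> z \<noteq> q 1 \<and> z \<noteq> q 2 \<and> z \<noteq> q 3 \<and>
      w \<noteq> z \<and> q 0 \<noteq> z \<and> q 1 \<noteq> z \<and> q 2 \<noteq> z \<and> q 3 \<noteq> z \<and> (c0 z = 1 \<or> c0 z = 2)"
    if "z \<in> V" "z \<notin> C" for z
    using that only[of z] c0r[of z] unfolding C_def by auto
  show ?thesis
  proof (cases "\<exists>z\<in>V. z \<notin> C \<and> (adj E z (q 0) \<or> adj E z (q 1) \<or> adj E z (q 2) \<or> adj E z (q 3))")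
    case True
    then obtain z where z: "z \<in> V" "z \<notin> C"
      and za: "adj E z (q 0) \<or> adj E z (q 1) \<or> adj E z (q 2) \<or> adj E z (q 3)" by blast
    note zf = zfacts[OF z]
    note S = F3 zf w3
    note SS = S[simplified]
    show ?thesis
    proof (cases "adj E z (q 0)")
      case A0: True
      have zc: "c0 z = 2" using zf c0a[OF A0] F3c by auto
      have A0': "adj E (q 0) z" using A0 adj_sym by blast
      have P: "P3 (c0(q 1 := 3))"
      proof (rule P3_upd[OF P0 F3V(2)])
        fix u assume u: "adj E (q 1) u"
        show "c0 u \<noteq> 3"
        proof
          assume "c0 u = 3"
          then have "u = w" using only adjD(2)[OF u] by blast
          then show False using u F3n by blast
        qed
      qed simp
      note T = zc A0'
      have "good (c0(q 1 := 3)) {q 2, q 0, w}"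
        by (rule seq3[OF P, of _ _ _ "q 1" "q 3" "q 1" z "q 0" "q 3"]) (simp_all add: SS T[simplified])
      then show ?thesis by blast
    next
      case nA0: False
      show ?thesis
      proof (cases "adj E z (q 3)")
        case A3: True
        have zc: "c0 z = 1" using zf c0a[OF A3] F3c by auto
        have A3': "adj E (q 3) z" using A3 adj_sym by blast
        have P: "P3 (c0(q 2 := 3))"
        proof (rule P3_upd[OF P0 F3V(3)])
          fix u assume u: "adj E (q 2) u"
          show "c0 u \<noteq> 3"
          proof
            assume "c0 u = 3"
            then have "u = w" using only adjD(2)[OF u] by blast
            then show False using u F3n by blast
          qed
        qed simp
        note T = zc A3'
        have "good (c0(q 2 := 3)) {q 1, q 3, w}"
          by (rule seq3[OF P, of _ _ _ "q 0" "q 2" "q 2" z "q 0" "q 3"]) (simp_all add: SS T[simplified])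
        then show ?thesis by blast
      next
        case nA3: False
        show ?thesis
        proof (cases "adj E z (q 1)")
          case A1: True
          have zc: "c0 z = 1" using zf c0a[OF A1] F3c by auto
          show ?thesis
          proof (cases "adj E z w")
            case Aw: True
            note T = zc A1 Aw
            have "good c0 {z, q 0, q 3}"
              by (rule seq3[OF P0, of _ _ _ w "q 1" w "q 1" w "q 2"]) (simp_all add: SS T[simplified])
            then show ?thesis by blast
          next
            case nAw: False
            have P: "P3 (c0(z := 3))"
            proof (rule P3_upd[OF P0 z(1)])
              fix u assume u: "adj E z u"
              show "c0 u \<noteq> 3"
              proof
                assume "c0 u = 3"
                then have "u = w" using only adjD(2)[OF u] by blast
                then show False using u nAw by blast
              qed
            qed simp
            have A1': "adj E (q 1) z" using A1 adj_sym by blast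
            note T = zc A1'
            have "good (c0(z := 3)) {q 1, q 0, q 3}"
              by (rule seq3[OF P, of _ _ _ "q 2" z w "q 1" w "q 2"]) (simp_all add: SS T[simplified])
            then show ?thesis by blast
          qed
        next
          case nA1: False
          then have A2: "adj E z (q 2)" using za nA0 nA3 by blast
          have zc: "c0 z = 2" using zf c0a[OF A2] F3c by auto
          show ?thesis
          proof (cases "adj E z w")
            case Aw: True
            note T = zc A2 Aw
            have "good c0 {z, q 0, q 3}"
              by (rule seq3[OF P0, of _ _ _ w "q 2" w "q 1" w "q 2"]) (simp_all add: SS T[simplified])
            then show ?thesis by blast
          next
            case nAw: False
            have P: "P3 (c0(z := 3))"
            proof (rule P3_upd[OF P0 z(1)])
              fix u assume u: "adj E z u"
              show "c0 u \<noteq> 3"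
              proof
                assume "c0 u = 3"
                then have "u = w" using only adjD(2)[OF u] by blast
                then show False using u nAw by blast
              qed
            qed simp
            have A2': "adj E (q 2) z" using A2 adj_sym by blast
            note T = zc A2'
            have "good (c0(z := 3)) {q 2, q 0, q 3}"
              by (rule seq3[OF P, of _ _ _ "q 1" z w "q 1" w "q 2"]) (simp_all add: SS T[simplified])
            then show ?thesis by blast
          qed
        qed
      qed
    qed
  next
    case False
    then have noz: "\<And>z. z \<in> V \<Longrightarrow> z \<notin> C \<Longrightarrow> \<not> adj E z (q 0) \<and> \<not> adj E z (q 1) \<and>
       \<not> adj E z (q 2) \<and> \<not> adj E z (q 3)" by blast
    show ?thesis
    proof (cases "V = C")
      case True
      have "graph_iso V E C5_V C5_E"
      proof (rule iso5[of V w "q 0" "q 1" "q 2" "q 3"])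
        show "V = {w, q 0, q 1, q 2, q 3}" using True unfolding C_def .
        show "w \<noteq> q 0" "w \<noteq> q 1" "w \<noteq> q 2" "w \<noteq> q 3" "q 0 \<noteq> q 1" "q 0 \<noteq> q 2" "q 0 \<noteq> q 3"
          "q 1 \<noteq> q 2" "q 1 \<noteq> q 3" "q 2 \<noteq> q 3" using F3d by auto
        show "{w, q 0} \<in> E" "{q 0, q 1} \<in> E" "{q 1, q 2} \<in> E" "{q 2, q 3} \<in> E" "{q 3, w} \<in> E"
          using F3a unfolding adj_def by auto
        show "{w, q 1} \<notin> E" "{w, q 2} \<notin> E" "{q 0, q 2} \<notin> E" "{q 0, q 3} \<notin> E" "{q 1, q 3} \<notin> E"
          using F3n unfolding adj_def by auto
        show "\<And>x. {x} \<notin> E"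
        proof
          fix x assume "{x} \<in> E"
          then have "adj E x x" unfolding adj_def by simp
          then show False using adjD(3) by blast
        qed
      qed
      then show ?thesis using niso by blast
    next
      case False
      then obtain y where y: "y \<in> V" "y \<notin> C" using CV by blast
      obtain x z where xz: "x \<in> C" "z \<notin> C" "adj E x z"
        using conn_out[of w C y] y CV unfolding C_def by blast
      have zV: "z \<in> V" using adjD(2)[OF xz(3)] .
      have "x = w"
      proof (rule ccontr)
        assume "x \<noteq> w"
        then have "x = q 0 \<or> x = q 1 \<or> x = q 2 \<or> x = q 3" using xz(1) unfolding C_def by blast
        then show False using noz[OF zV xz(2)] xz(3) adj_sym by blast
      qed
      then have wz: "adj E w z" using xz by simp
      note zf = zfacts[OF zV xz(2)]
      have nb: "\<And>u. adj E (q 0) u \<Longrightarrow> u = w \<or> u = q 1"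
        "\<And>u. adj E (q 1) u \<Longrightarrow> u = q 0 \<or> u = q 2"
        "\<And>u. adj E (q 2) u \<Longrightarrow> u = q 1 \<or> u = q 3"
        "\<And>u. adj E (q 3) u \<Longrightarrow> u = w \<or> u = q 2"
      proof -
        have inC: "u \<in> C"
          if "adj E (q 0) u \<or> adj E (q 1) u \<or> adj E (q 2) u \<or> adj E (q 3) u" for u
        proof (rule ccontr)
          assume uC: "u \<notin> C"
          have uV: "u \<in> V" using that adjD(2) by blast
          have "\<not> adj E u (q 0) \<and> \<not> adj E u (q 1) \<and> \<not> adj E u (q 2) \<and> \<not> adj E u (q 3)"
            using noz[OF uV uC] .
          then show False using that adj_sym by blast
        qed
        fix u
        show "adj E (q 0) u \<Longrightarrow> u = w \<or> u = q 1"
          using inC[of u] F3n adjD(3) unfolding C_def by auto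
        show "adj E (q 1) u \<Longrightarrow> u = q 0 \<or> u = q 2"
          using inC[of u] F3n adjD(3) unfolding C_def by auto
        show "adj E (q 2) u \<Longrightarrow> u = q 1 \<or> u = q 3"
          using inC[of u] F3n adjD(3) unfolding C_def by auto
        show "adj E (q 3) u \<Longrightarrow> u = w \<or> u = q 2"
          using inC[of u] F3n adjD(3) unfolding C_def by auto
      qed
      note S = F3 zf w3
      note SS = S[simplified]
      have zw: "adj E w z" by (rule wz)
      show ?thesis
      proof (cases "c0 z = 2")
        case True
        have P1: "P3 (c0(q 2 := 3))"
proof (rule P3_upd[OF P0 F3V(3)])
          fix u assume "adj E (q 2) u"
          then have "u = q 1 \<or> u = q 3" by (rule nb(3))
          then show "c0 u \<noteq> 3" using F3c F3d w3 by auto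
        qed simp
        have P: "P3 ((c0(q 2 := 3))(q 3 := 1))"
proof (rule P3_upd[OF P1 F3V(4)])
          fix u assume "adj E (q 3) u"
          then have "u = w \<or> u = q 2" by (rule nb(4))
          then show "(c0(q 2 := 3)) u \<noteq> 1" using F3c F3d w3 by auto
        qed simp
        note T = True zw
        have "good ((c0(q 2 := 3))(q 3 := 1)) {q 2, w, q 0}"
          by (rule seq3[OF P, of _ _ _ "q 1" "q 3" z "q 3" w "q 1"]) (simp_all add: SS T[simplified])
        then show ?thesis by blast
      next
        case False
        then have zc: "c0 z = 1" using zf by blast
        have P1: "P3 (c0(q 1 := 3))"
proof (rule P3_upd[OF P0 F3V(2)])
          fix u assume "adj E (q 1) u"
          then have "u = q 0 \<or> u = q 2" by (rule nb(2))
          then show "c0 u \<noteq> 3" using F3c F3d w3 by auto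
        qed simp
        have P: "P3 ((c0(q 1 := 3))(q 0 := 2))"
proof (rule P3_upd[OF P1 F3V(1)])
          fix u assume "adj E (q 0) u"
          then have "u = w \<or> u = q 1" by (rule nb(1))
          then show "(c0(q 1 := 3)) u \<noteq> 2" using F3c F3d w3 by auto
        qed simp
        note T = zc zw
        have "good ((c0(q 1 := 3))(q 0 := 2)) {q 1, w, q 3}"
          by (rule seq3[OF P, of _ _ _ "q 0" "q 2" z "q 0" w "q 2"]) (simp_all add: SS T[simplified])
        then show ?thesis by blast
      qed
    qed
  qed
qed
end

end

definition L30 :: "nat list list" where "L30 = [[1,2,1,2,3],[1,2,1,3,2],[1,2,3,1,2],[1,2,3,1,3],[1,2,3,2,3],[1,3,1,2,3],[1,3,1,3,2],[1,3,2,1,2],[1,3,2,1,3],[1,3,2,3,2],[2,1,2,1,3],[2,1,2,3,1],[2,1,3,1,3],[2,1,3,2,1],[2,1,3,2,3],[2,3,1,2,1],[2,3,1,2,3],[2,3,1,3,1],[2,3,2,1,3],[2,3,2,3,1],[3,1,2,1,2],[3,1,2,3,1],[3,1,2,3,2],[3,1,3,1,2],[3,1,3,2,1],[3,2,1,2,1],[3,2,1,3,1],[3,2,1,3,2],[3,2,3,1,2],[3,2,3,2,1]]"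

lemma L30_flex: "list_all (\<lambda>xs. list_all (\<lambda>i. list_all (\<lambda>j. list_ex (\<lambda>ys. ys!i = xs!i \<and> ys!j = xs!j \<and> ys \<noteq> xs) L30) [0..<5]) [0..<5]) L30"
  by (simp add: L30_def upt_rec)

lemma L30_ok: "list_all (\<lambda>ys. length ys = 5 \<and> set ys \<subseteq> {1,2,3} \<and> ys!0 \<noteq> ys!1 \<and> ys!1 \<noteq> ys!2 \<and>
   ys!2 \<noteq> ys!3 \<and> ys!3 \<noteq> ys!4 \<and> ys!4 \<noteq> ys!0) L30"
  by (simp add: L30_def)

lemma L30_complete:
  assumes "x0 = 1 \<or> x0 = 2 \<or> x0 = 3" "x1 = 1 \<or> x1 = 2 \<or> x1 = 3" "x2 = 1 \<or> x2 = 2 \<or> x2 = 3"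
    "x3 = 1 \<or> x3 = 2 \<or> x3 = 3" "x4 = 1 \<or> x4 = 2 \<or> x4 = 3"
    "x0 \<noteq> x1" "x1 \<noteq> x2" "x2 \<noteq> x3" "x3 \<noteq> x4" "x4 \<noteq> x0"
  shows "[x0, x1, x2, x3, x4] \<in> set L30"
  using assms by (elim disjE) (simp_all add: L30_def)

lemma lt5: "(k::nat) < 5 \<Longrightarrow> k = 0 \<or> k = 1 \<or> k = 2 \<or> k = 3 \<or> k = 4" by auto

lemma C5_flex:
  fixes t :: "nat \<Rightarrow> nat"
  assumes tr: "\<And>k. k < 5 \<Longrightarrow> t k = 1 \<or> t k = 2 \<or> t k = 3"
    and tp: "t 0 \<noteq> t 1" "t 1 \<noteq> t 2" "t 2 \<noteq> t 3" "t 3 \<noteq> t 4" "t 4 \<noteq> t 0"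
    and ij: "i < 5" "j < 5"
  shows "\<exists>d. (\<forall>k<5. d k \<in> {1,2,3}) \<and> d 0 \<noteq> d 1 \<and> d 1 \<noteq> d 2 \<and> d 2 \<noteq> d 3 \<and> d 3 \<noteq> d 4 \<and>
    d 4 \<noteq> d 0 \<and> d i = t i \<and> d j = t j \<and> (\<exists>k<5. d k \<noteq> t k)"
proof -
  define xs where "xs = [t 0, t 1, t 2, t 3, t 4]"
  have xs: "xs \<in> set L30" unfolding xs_def
    by (rule L30_complete[OF tr[of 0] tr[of 1] tr[of 2] tr[of 3] tr[of 4] tp]) simp_all
  have nth: "xs ! k = t k" if "k < 5" for k
    using lt5[OF that] by (elim disjE) (simp_all add: xs_def)
  have lx: "length xs = 5" unfolding xs_def by simp
  have A: "\<forall>xs\<in>set L30. \<forall>i\<in>set [0..<5]. \<forall>j\<in>set [0..<5]. \<exists>ys\<in>set L30. ys!i = xs!i \<and> ys!j = xs!j \<and> ys \<noteq> xs"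
    using L30_flex unfolding list_all_iff list_ex_iff .
  have ij': "i \<in> set [0..<5]" "j \<in> set [0..<5]" using ij by auto
  obtain ys where ys: "ys \<in> set L30" "ys!i = xs!i" "ys!j = xs!j" "ys \<noteq> xs"
    using A xs ij' by blast
  have B: "\<forall>ys\<in>set L30. length ys = 5 \<and> set ys \<subseteq> {1,2,3} \<and> ys!0 \<noteq> ys!1 \<and> ys!1 \<noteq> ys!2 \<and>
   ys!2 \<noteq> ys!3 \<and> ys!3 \<noteq> ys!4 \<and> ys!4 \<noteq> ys!0"
    using L30_ok unfolding list_all_iff .
  have yok: "length ys = 5" "set ys \<subseteq> {1,2,3}" "ys!0 \<noteq> ys!1" "ys!1 \<noteq> ys!2"
    "ys!2 \<noteq> ys!3" "ys!3 \<noteq> ys!4" "ys!4 \<noteq> ys!0"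
    using B ys(1) by blast+
  have "\<exists>k<5. ys ! k \<noteq> xs ! k"
  proof (rule ccontr)
    assume H: "\<not> (\<exists>k<5. ys ! k \<noteq> xs ! k)"
    have "ys = xs"
    proof (rule nth_equalityI)
      show "length ys = length xs" using yok(1) lx by simp
      fix k assume "k < length ys"
      then show "ys ! k = xs ! k" using H yok(1) by auto
    qed
    then show False using ys(4) by simp
  qed
  then obtain k where k: "k < 5" "ys ! k \<noteq> t k" using nth by auto
  have rng: "\<forall>k<5. ys ! k \<in> {1, 2, 3}"
  proof (intro allI impI)
    fix k :: nat assume "k < 5"
    then have "ys ! k \<in> set ys" using yok(1) by simp
    then show "ys ! k \<in> {1, 2, 3}" using yok(2) by blast
  qed
  have "ys ! i = t i" "ys ! j = t j" using ys(2,3) nth ij by auto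
  then show ?thesis using rng yok(3-7) k by blast
qed

lemma edge_ne:
  fixes d :: "nat \<Rightarrow> nat"
  assumes "{k, l} \<in> C5_E" "d 0 \<noteq> d 1" "d 1 \<noteq> d 2" "d 2 \<noteq> d 3" "d 3 \<noteq> d 4" "d 4 \<noteq> d 0"
  shows "d k \<noteq> d l"
  using assms unfolding C5_E_eq by (auto simp: doubleton_eq_iff)

lemma card_le2: assumes "finite T" "card T \<le> 2" shows "\<exists>x y. T \<subseteq> {x, y}"
proof -
  have "card T = 0 \<or> card T = 1 \<or> card T = 2" using assms(2) by linarith
  then show ?thesis
  proof (elim disjE)
    assume "card T = 0" then have "T = {}" using assms by simp
    then show ?thesis by blast
  next
    assume "card T = 1" then obtain x where "T = {x}" by (auto simp: card_1_singleton_iff)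
    then show ?thesis by blast
  next
    assume "card T = 2" then obtain x y where "T = {x, y}" by (auto simp: card_2_iff)
    then show ?thesis by blast
  qed
qed

context G3 begin

lemma sn_fin: "finite {card S | S c. proper_colouring V E (chromatic_number V E) c \<and> critical_set V E c S}"
proof (rule finite_subset[of _ "{..card V}"])
  show "{card S | S c. proper_colouring V E (chromatic_number V E) c \<and> critical_set V E c S} \<subseteq> {..card V}"
    using finV by (auto simp: critical_set_def determining_set_def intro!: card_mono)
qed simp

lemma backward:
  assumes iso: "graph_iso V E C5_V C5_E"
  shows "sn V E = card V - 2"
proof -
  obtain f where bij: "bij_betw f V C5_V" and ed: "\<forall>u\<in>V. \<forall>v\<in>V. {u,v} \<in> E \<longleftrightarrow> {f u, f v} \<in> C5_E"
    using iso unfolding graph_iso_def by blast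
  define a where "a = inv_into V f"
  have fV: "f v < 5" if "v \<in> V" for v using bij that unfolding C5_V_def by (auto dest: bij_betwE)
  have aV: "a k \<in> V" if "k < 5" for k
    using bij that unfolding a_def C5_V_def bij_betw_def by (auto intro: inv_into_into)
  have fa: "f (a k) = k" if "k < 5" for k
    using bij_betw_inv_into_right[OF bij] that unfolding a_def C5_V_def by auto
  have af: "a (f v) = v" if "v \<in> V" for v
    using bij_betw_inv_into_left[OF bij that] unfolding a_def .
  have cardV: "card V = 5" using bij_betw_same_card[OF bij] unfolding C5_V_def by simp
  have adjiff: "adj E u v \<longleftrightarrow> {f u, f v} \<in> C5_E" if "u \<in> V" "v \<in> V" for u v
    using ed that unfolding adj_def by blast
  have adja: "adj E (a k) (a l)" if "k < 5" "l < 5" "{k, l} \<in> C5_E" for k l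
    using adjiff[OF aV[OF that(1)] aV[OF that(2)]] fa that by simp
  have e01: "{0,1} \<in> C5_E" "{1,2} \<in> C5_E" "{2,3} \<in> C5_E" "{3,4} \<in> C5_E" "{4,0} \<in> C5_E"
    "{1,0} \<in> C5_E" "{4,3} \<in> C5_E" "{3,4} \<in> C5_E" "{0,4} \<in> C5_E" "{2,1} \<in> C5_E" "{3,2} \<in> C5_E"
    unfolding C5_E_eq by (auto simp: insert_commute)
  have low: "3 \<le> card T" if c: "P3 c" and det: "determining_set V E c T" for c T
  proof (rule ccontr)
    assume "\<not> 3 \<le> card T"
    then have T2: "card T \<le> 2" by simp
    have TV: "T \<subseteq> V" using det unfolding determining_set_def by blast
    then have fT: "finite T" using finV finite_subset by blast
    obtain x y where xy: "T \<subseteq> {x, y}" using card_le2[OF fT T2] by blast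
    define i where "i = (if x \<in> V then f x else 0)"
    define j where "j = (if y \<in> V then f y else 0)"
    have ij: "i < 5" "j < 5" unfolding i_def j_def using fV by auto
    have Tij: "T \<subseteq> {a i, a j}"
    proof
      fix s assume s: "s \<in> T"
      then have "s \<in> V" using TV by blast
      then show "s \<in> {a i, a j}" using s xy af unfolding i_def j_def by auto
    qed
    define t where "t = (\<lambda>k. c (a k))"
    have tr: "t k = 1 \<or> t k = 2 \<or> t k = 3" if "k < 5" for k
      unfolding t_def using P3_range[OF c aV[OF that]] .
    have tp: "t 0 \<noteq> t 1" "t 1 \<noteq> t 2" "t 2 \<noteq> t 3" "t 3 \<noteq> t 4" "t 4 \<noteq> t 0"
      unfolding t_def using P3_adj[OF c adja] e01 by auto
    obtain d where d: "\<forall>k<5. d k \<in> {1,2,3}" "d 0 \<noteq> d 1" "d 1 \<noteq> d 2" "d 2 \<noteq> d 3" "d 3 \<noteq> d 4"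
      "d 4 \<noteq> d 0" "d i = t i" "d j = t j" "\<exists>k<5. d k \<noteq> t k"
      using C5_flex[OF tr tp ij] by blast
    define c' where "c' = restrict (\<lambda>v. d (f v)) V"
    have P: "P3 c'" unfolding proper_colouring_def
    proof (intro conjI ballI impI)
      have dr: "d (f v) \<in> {1..3}" if "v \<in> V" for v
      proof -
        have "d (f v) \<in> {1,2,3}" using d(1) fV[OF that] by blast
        then show ?thesis by auto
      qed
      show "c' \<in> V \<rightarrow>\<^sub>E {1..3}" unfolding c'_def using dr by auto
      fix u v assume uv: "u \<in> V" "v \<in> V" "adj E u v"
      have "{f u, f v} \<in> C5_E" using adjiff uv by blast
      then have "d (f u) \<noteq> d (f v)" using edge_ne d(2-6) by blast
      then show "c' u \<noteq> c' v" unfolding c'_def using uv by simp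
    qed
    have ne: "c' \<noteq> c"
    proof
      assume "c' = c"
      obtain k where k: "k < 5" "d k \<noteq> t k" using d(9) by blast
      have "c' (a k) = d k" unfolding c'_def using aV[OF k(1)] fa[OF k(1)] by simp
      then show False using \<open>c' = c\<close> k unfolding t_def by simp
    qed
    have ag: "\<forall>s\<in>T. c' s = c s"
    proof
      fix s assume "s \<in> T"
      then have "s = a i \<or> s = a j" using Tij by blast
      then show "c' s = c s"
        using d(7,8) aV[OF ij(1)] aV[OF ij(2)] fa[OF ij(1)] fa[OF ij(2)] unfolding c'_def t_def by auto
    qed
    show False using det P ne ag unfolding determining_set_def chi by blast
  qed
  define col where "col = (\<lambda>k::nat. if k = 4 then 3 else if even k then 1 else (2::nat))"
  define c5 where "c5 = restrict (\<lambda>v. col (f v)) V"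
  have colv: "col 0 = 1" "col 1 = 2" "col 2 = 1" "col 3 = 2" "col 4 = 3" unfolding col_def by auto
  have P5: "P3 c5" unfolding proper_colouring_def
  proof (intro conjI ballI impI)
    show "c5 \<in> V \<rightarrow>\<^sub>E {1..3}" unfolding c5_def col_def by auto
    fix u v assume uv: "u \<in> V" "v \<in> V" "adj E u v"
    have "{f u, f v} \<in> C5_E" using adjiff uv by blast
    then have "col (f u) \<noteq> col (f v)" by (rule edge_ne) (simp_all add: colv[simplified])
    then show "c5 u \<noteq> c5 v" unfolding c5_def using uv by simp
  qed
  have c5a: "c5 (a k) = col k" if "k < 5" for k unfolding c5_def using aV[OF that] fa[OF that] by simp
  have ane: "a k \<noteq> a l" if "k < 5" "l < 5" "k \<noteq> l" for k l
    using fa[OF that(1)] fa[OF that(2)] that(3) by auto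
  have an: "a 0 \<noteq> a 1" "a 0 \<noteq> a 2" "a 0 \<noteq> a 4" "a 3 \<noteq> a 1" "a 3 \<noteq> a 2" "a 3 \<noteq> a 4" "a 0 \<noteq> a 3"
    by (rule ane; simp)+
  have det: "determining_set V E c5 (V - {a 0, a 3})"
    unfolding determining_set_def chi
  proof (intro conjI notI)
    show "V - {a 0, a 3} \<subseteq> V" by blast
    assume "\<exists>c'. P3 c' \<and> c' \<noteq> c5 \<and> (\<forall>s\<in>V - {a 0, a 3}. c' s = c5 s)"
    then obtain c' where c': "P3 c'" "c' \<noteq> c5" "\<forall>s\<in>V - {a 0, a 3}. c' s = c5 s" by blast
    have s: "c' (a 1) = c5 (a 1)" "c' (a 2) = c5 (a 2)" "c' (a 4) = c5 (a 4)"
      using c'(3) aV an by auto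
    have e0: "c' (a 0) = c5 (a 0)"
      by (rule force[OF P5 c'(1) adja[of 0 1] adja[of 0 4]]) (use s c5a colv e01 in auto)
    have e3: "c' (a 3) = c5 (a 3)"
      by (rule force[OF P5 c'(1) adja[of 3 2] adja[of 3 4]]) (use s c5a colv e01 in auto)
    have "c' = c5"
    proof (rule PiE_ext[of c' V "\<lambda>_. {1..3}" c5])
      show "c' \<in> V \<rightarrow>\<^sub>E {1..3}" "c5 \<in> V \<rightarrow>\<^sub>E {1..3}" using c'(1) P5 unfolding proper_colouring_def by auto
      fix v assume "v \<in> V"
      then show "c' v = c5 v" using c'(3) e0 e3 by blast
    qed
    then show False using c'(2) by simp
  qed
  obtain T where T: "T \<subseteq> V - {a 0, a 3}" "critical_set V E c5 T" using crit_exists[OF det] by blast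
  have "card T \<le> card (V - {a 0, a 3})" using T(1) finV by (intro card_mono) auto
  also have "\<dots> = 3" using cardV aV an finV by (simp add: card_Diff_subset)
  finally have "card T \<le> 3" .
  moreover have "3 \<le> card T" using low[OF P5] T(2) unfolding critical_set_def by blast
  ultimately have cT: "card T = 3" by simp
  have "sn V E = 3" unfolding sn_def
  proof (rule Min_eqI[OF sn_fin])
    show "3 \<in> {card S | S c. proper_colouring V E (chromatic_number V E) c \<and> critical_set V E c S}"
      unfolding chi using P5 T(2) cT by force
    fix y assume "y \<in> {card S | S c. proper_colouring V E (chromatic_number V E) c \<and> critical_set V E c S}"
    then show "3 \<le> y" unfolding chi critical_set_def using low by blast
  qed
  then show ?thesis using cardV by simp
qed

end

context G3m begin

lemma core:
  assumes niso: "\<not> graph_iso V E C5_V C5_E"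
  shows "\<exists>c U. good c U"
proof -
  define W where "W = {v\<in>V. c0 v = 3}"
  have fW: "finite W" unfolding W_def using finV by simp
  have Wne: "W \<noteq> {}"
  proof
    assume "W = {}"
    then have n3: "\<And>v. v \<in> V \<Longrightarrow> c0 v \<noteq> 3" unfolding W_def by blast
    have "proper_colouring V E 2 c0" unfolding proper_colouring_def
    proof (intro conjI)
      show "c0 \<in> V \<rightarrow>\<^sub>E {1..2}"
      proof (rule PiE_I)
        fix v assume v: "v \<in> V"
        then show "c0 v \<in> {1..2}" using c0r[OF v] n3[OF v] by auto
      next
        fix v assume "v \<notin> V"
        then show "c0 v = undefined" using P0 unfolding proper_colouring_def by (auto simp: PiE_iff extensional_def)
      qed
      show "\<forall>u\<in>V. \<forall>v\<in>V. adj E u v \<longrightarrow> c0 u \<noteq> c0 v" using c0a by blast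
    qed
    then show False by (rule no_P2)
  qed
  show ?thesis
  proof (cases "card W \<ge> 3")
    case True
    then obtain U where U: "U \<subseteq> W" "card U = 3" using obtain_subset_with_card_n by metis
    then obtain x y z where xyz: "U = {x, y, z}" "x \<noteq> y" "y \<noteq> z" "x \<noteq> z" by (auto simp: card_3_iff)
    have in3: "x \<in> V" "c0 x = 3" "y \<in> V" "c0 y = 3" "z \<in> V" "c0 z = 3" using U xyz unfolding W_def by auto
    obtain ax bx where x: "adj E x ax" "c0 ax = 1" "adj E x bx" "c0 bx = 2" using satW in3 by metis
    obtain ay by' where y: "adj E y ay" "c0 ay = 1" "adj E y by'" "c0 by' = 2" using satW in3 by metis
    obtain az bz where z: "adj E z az" "c0 az = 1" "adj E z bz" "c0 bz = 2" using satW in3 by metis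
    have ne: "ax \<noteq> y" "ax \<noteq> z" "bx \<noteq> y" "bx \<noteq> z" "ay \<noteq> z" "by' \<noteq> z"
      using x y in3 by auto
    have "good c0 {x, y, z}"
      by (rule seq3[OF P0 xyz(2) xyz(4) xyz(3) x(1) x(3) ne(1-4) _ y(1) y(3) ne(5-6) _ z(1) z(3)])
        (simp_all add: x y z)
    then show ?thesis by blast
  next
    case False
    obtain w where wW: "w \<in> W" using Wne by blast
    then have wV: "w \<in> V" and w3: "c0 w = 3" unfolding W_def by auto
    interpret G3w V E c0 w by unfold_locales (fact wV, fact w3)
    have "L \<ge> 3" by (rule L3)
    moreover have "odd L" by (rule Lodd)
    moreover have "L \<noteq> 4" using \<open>odd L\<close> by (intro notI) simp
    ultimately have "L = 3 \<or> L \<ge> 5" by linarith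
    then show ?thesis
    proof
      assume "L \<ge> 5" then show ?thesis by (rule caseL5)
    next
      assume L3: "L = 3"
      have "card W \<noteq> 0" using Wne fW by simp
      then have "card W = 1 \<or> card W = 2" using False by linarith
      then show ?thesis
      proof
        assume "card W = 1"
        then obtain x where "W = {x}" by (auto simp: card_1_singleton_iff)
        then have "W = {w}" using wW by auto
        then show ?thesis using caseW1[OF L3] niso unfolding W_def by blast
      next
        assume "card W = 2"
        then obtain x y where xy: "W = {x, y}" "x \<noteq> y" by (auto simp: card_2_iff)
        then obtain w' where w': "W = {w, w'}" "w' \<noteq> w" using wW by auto
        then have "w' \<in> V" "c0 w' = 3" unfolding W_def by auto
        then show ?thesis using caseW2[OF L3 _ _ w'(2)] w'(1) unfolding W_def by blast
      qed
    qed
  qed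
qed

end

theorem proposition2:
  fixes V :: "'a set" and E :: "'a set set"
  assumes "simple_graph V E" and "connected_graph V E" and "triangle_free E"
    and "chromatic_number V E = 3"
  shows "sn V E = card V - 2 \<longleftrightarrow> graph_iso V E C5_V C5_E"
proof -
  interpret G3 V E using assms by unfold_locales
  show ?thesis
  proof
    assume sn: "sn V E = card V - 2"
    show "graph_iso V E C5_V C5_E"
    proof (rule ccontr)
      assume niso: "\<not> graph_iso V E C5_V C5_E"
      obtain c1 where c1: "P3 c1" using ex_P3 by blast
      obtain c0 where c0: "P3 c0" and mn: "\<forall>c. P3 c \<longrightarrow> card {v\<in>V. c0 v = 3} \<le> card {v\<in>V. c v = 3}"
        using ex_has_least_nat[of P3 c1 "\<lambda>c. card {v\<in>V. c v = 3}"] c1 by blast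
      interpret G3m V E c0 by unfold_locales (use c0 mn in auto)
      obtain c U where g: "good c U" using core[OF niso] by blast
      have "sn V E \<le> card V - 3" by (rule good_sn[OF g])
      moreover have "card V \<ge> 3"
        using g finV unfolding good_def by (metis card_mono)
      ultimately show False using sn by linarith
    qed
  next
    assume "graph_iso V E C5_V C5_E"
    then show "sn V E = card V - 2" by (rule backward)
  qed
qed

end
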